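(* Let $(V^n,g)$ be a Euclidean vector space, $\mathfrak{g}\subseteq\mathfrak{so}(V)$ a Lie subalgebra and $T\in\Lambda^3V\cap(\Lambda^1V\otimes\mathfrak{g})$. Define $R^T(X,Y)=[T_X,T_Y]+2T_{T_XY}$ and $\Omega^T=\frac12\sum_{i}T_{e_i}\wedge T_{e_i}\in\Lambda^4V$. Then: (i) $R^T\in\mathcal{K}(\mathfrak{g},V)$; (ii) $\Omega^T\in\Lambda^4V\cap(\Lambda^2V\otimes\mathfrak{g})$; (iii) $R^T=0$ if and only if $T=0$; (iv) if moreover $(\mathfrak{g},V)$ is irreducible and $\dim\mathcal{K}(\mathfrak{g},V)=1$, then $\langle X\lrcorner T,Y\lrcorner T\rangle=\frac3n|T|^2\langle X,Y\rangle$ for all $X,Y\in V$.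
   Context: $\Lambda^2V$ is identified with $\mathfrak{so}(V)$ via $F\mapsto g(F\cdot,\cdot)$, with the standard inner product on forms ($e_{i_1}\wedge\dots\wedge e_{i_p}$, $i_1<\dots<i_p$, orthonormal). For $T\in\Lambda^3V$, $T_X\in\mathfrak{so}(V)$ is defined by $g(T_X\cdot,\cdot)=X\lrcorner T$; $\{e_i\}$ is an orthonormal basis. $\Lambda^3V\cap(\Lambda^1V\otimes\mathfrak{g})=\{T\in\Lambda^3V:X\lrcorner T\in\mathfrak{g}\ \forall X\}$ and $\Lambda^4V\cap(\Lambda^2V\otimes\mathfrak{g})=\{\beta\in\Lambda^4V:X\lrcorner Y\lrcorner\beta\in\mathfrak{g}\ \forall X,Y\}$. $\mathcal{K}(\mathfrak{g},V)$ is the space of $R\in\Lambda^2V\otimes\Lambda^2V$ with $R(X,Y)\in\mathfrak{g}$ for all $X,Y$ satisfying the first Bianchi identity $\sum_ie_i\wedge R(e_i,X)=0$ for all $X$. *)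

theory Defs
  imports "HOL-Analysis.Analysis"
begin

text \<open>V = real^'n with the standard (orthonormal) basis e i = axis i 1;
  n = CARD('n).  so(V) = skew-symmetric matrices real^'n^'n (acting by *v).
  A 2-form F is identified with the matrix M in so(V) such that F(Y,Z) = (M *v Y) \<bullet> Z.
  p-forms for p = 3,4 are stored by their components on the basis (alternating arrays).\<close>

definition e :: "'n::finite \<Rightarrow> real^'n" where
  "e i = axis i 1"

definition f2 :: "real^'n^'n \<Rightarrow> real^'n \<Rightarrow> real^'n \<Rightarrow> real" where
  "f2 M Y Z = (M *v Y) \<bullet> Z"

definition skew :: "real^'n^'n \<Rightarrow> bool" where
  "skew M \<longleftrightarrow> transpose M = - M"

definition lie_subalgebra_so :: "(real^'n^'n) set \<Rightarrow> bool" where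
  "lie_subalgebra_so g \<longleftrightarrow> subspace g \<and> (\<forall>A\<in>g. skew A) \<and>
     (\<forall>A\<in>g. \<forall>B\<in>g. A ** B - B ** A \<in> g)"

text \<open>Lambda^3 V: alternating arrays T \$ i \$ j \$ k = T(e_i,e_j,e_k)\<close>
definition alt3 :: "real^'n^'n^'n \<Rightarrow> bool" where
  "alt3 T \<longleftrightarrow> (\<forall>i j k. T$j$i$k = - T$i$j$k \<and> T$i$k$j = - T$i$j$k)"

definition alt4 :: "real^'n^'n^'n^'n \<Rightarrow> bool" where
  "alt4 B \<longleftrightarrow> (\<forall>a b c d. B$b$a$c$d = - B$a$b$c$d \<and> B$a$c$b$d = - B$a$b$c$d
                          \<and> B$a$b$d$c = - B$a$b$c$d)"

text \<open>T_X in so(V): g(T_X Y, Z) = (X \<lrcorner> T)(Y,Z) = T(X,Y,Z)\<close>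
definition Tx :: "real^'n^'n^'n \<Rightarrow> real^'n \<Rightarrow> real^'n^'n" where
  "Tx T X = (\<chi> k j. \<Sum>i\<in>UNIV. X$i * T$i$j$k)"

definition L3g :: "(real^'n^'n) set \<Rightarrow> (real^'n^'n^'n) set" where
  "L3g g = {T. alt3 T \<and> (\<forall>X. Tx T X \<in> g)}"

text \<open>X \<lrcorner> Y \<lrcorner> \<beta> for a 4-form, as an element of so(V):
  (X \<lrcorner> (Y \<lrcorner> \<beta>))(v,w) = \<beta>(Y,X,v,w)\<close>
definition ins2 :: "real^'n^'n^'n^'n \<Rightarrow> real^'n \<Rightarrow> real^'n \<Rightarrow> real^'n^'n" where
  "ins2 B X Y = (\<chi> k j. \<Sum>a\<in>UNIV. \<Sum>b\<in>UNIV. Y$a * X$b * B$a$b$j$k)"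

definition L4g :: "(real^'n^'n) set \<Rightarrow> (real^'n^'n^'n^'n) set" where
  "L4g g = {B. alt4 B \<and> (\<forall>X Y. ins2 B X Y \<in> g)}"

text \<open>Lambda^2 V \<otimes> Lambda^2 V: R \$ i \$ j = R(e_i,e_j) \<in> so(V) = Lambda^2 V\<close>
definition L2L2 :: "real^'n^'n^'n^'n \<Rightarrow> bool" where
  "L2L2 R \<longleftrightarrow> (\<forall>i j. R$j$i = - R$i$j) \<and> (\<forall>i j. skew (R$i$j))"

definition Rapp :: "real^'n^'n^'n^'n \<Rightarrow> real^'n \<Rightarrow> real^'n \<Rightarrow> real^'n^'n" where
  "Rapp R X Y = (\<Sum>i\<in>UNIV. \<Sum>j\<in>UNIV. (X$i * Y$j) *\<^sub>R R$i$j)"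

text \<open>wedge of a 1-form (vector a, via g) with a 2-form (matrix M); result a 3-form\<close>
definition wedge12 :: "real^'n \<Rightarrow> real^'n^'n \<Rightarrow> real^'n^'n^'n" where
  "wedge12 a M = (\<chi> i j k. a$i * f2 M (e j) (e k) - a$j * f2 M (e i) (e k)
                             + a$k * f2 M (e i) (e j))"

text \<open>wedge of two 2-forms; result a 4-form (determinant convention,
  e_1\<and>e_2\<and>e_3\<and>e_4 evaluates to 1 on (e_1,e_2,e_3,e_4))\<close>
definition wedge22 :: "real^'n^'n \<Rightarrow> real^'n^'n \<Rightarrow> real^'n^'n^'n^'n" where
  "wedge22 M N = (\<chi> a b c d.
      f2 M (e a) (e b) * f2 N (e c) (e d) - f2 M (e a) (e c) * f2 N (e b) (e d)
    + f2 M (e a) (e d) * f2 N (e b) (e c) + f2 M (e b) (e c) * f2 N (e a) (e d)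
    - f2 M (e b) (e d) * f2 N (e a) (e c) + f2 M (e c) (e d) * f2 N (e a) (e b))"

definition Kspace :: "(real^'n^'n) set \<Rightarrow> (real^'n^'n^'n^'n) set" where
  "Kspace g = {R. L2L2 R \<and> (\<forall>X Y. Rapp R X Y \<in> g) \<and>
                 (\<forall>X. (\<Sum>i\<in>UNIV. wedge12 (e i) (Rapp R (e i) X)) = 0)}"

definition RTfun :: "real^'n^'n^'n \<Rightarrow> real^'n \<Rightarrow> real^'n \<Rightarrow> real^'n^'n" where
  "RTfun T X Y = (Tx T X ** Tx T Y - Tx T Y ** Tx T X) + 2 *\<^sub>R Tx T (Tx T X *v Y)"

definition RT :: "real^'n^'n^'n \<Rightarrow> real^'n^'n^'n^'n" where
  "RT T = (\<chi> i j. RTfun T (e i) (e j))"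

definition OmegaT :: "real^'n^'n^'n \<Rightarrow> real^'n^'n^'n^'n" where
  "OmegaT T = (1/2) *\<^sub>R (\<Sum>i\<in>UNIV. wedge22 (Tx T (e i)) (Tx T (e i)))"

text \<open>inner product of forms (e_I, I increasing, orthonormal); for alternating
  forms \<Sum>_{i<j} = (1/2) \<Sum>_{i,j} and \<Sum>_{i<j<k} = (1/6) \<Sum>_{i,j,k}\<close>
definition inner2 :: "real^'n^'n \<Rightarrow> real^'n^'n \<Rightarrow> real" where
  "inner2 M N = (1/2) * (\<Sum>i\<in>UNIV. \<Sum>j\<in>UNIV. f2 M (e i) (e j) * f2 N (e i) (e j))"

definition normsq3 :: "real^'n^'n^'n \<Rightarrow> real" where
  "normsq3 T = (1/6) * (\<Sum>i\<in>UNIV. \<Sum>j\<in>UNIV. \<Sum>k\<in>UNIV. (T$i$j$k)^2)"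

definition irreducible_so :: "(real^'n^'n) set \<Rightarrow> bool" where
  "irreducible_so g \<longleftrightarrow> (\<forall>W. subspace W \<and> (\<forall>A\<in>g. \<forall>x\<in>W. A *v x \<in> W)
                          \<longrightarrow> W = {0} \<or> W = UNIV)"

end

theory Submission imports Defs begin

lemma e_nth: "e i $ a = (if a = i then 1 else 0)"
  by (simp add: e_def axis_def)

lemma Tx_nth: "Tx T X $ k $ j = (\<Sum>i\<in>UNIV. X$i * T$i$j$k)"
  by (simp add: Tx_def)

definition tri :: "real^'n^'n^'n \<Rightarrow> real^'n \<Rightarrow> real^'n \<Rightarrow> real^'n \<Rightarrow> real" where
  "tri T u v w = (Tx T u *v v) \<bullet> w"

lemma sum_swap_in: "(\<Sum>i\<in>A. \<Sum>j\<in>B. \<Sum>k\<in>C. f i j k) = (\<Sum>i\<in>A. \<Sum>k\<in>C. \<Sum>j\<in>B. f i j k)"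
  by (rule sum.cong[OF refl], rule sum.swap)

lemma sum_swap_out: "(\<Sum>i\<in>A. \<Sum>j\<in>B. (f i j :: 'a::comm_monoid_add)) = (\<Sum>j\<in>B. \<Sum>i\<in>A. f i j)"
  by (rule sum.swap)

lemma sum3_rev: "(\<Sum>k\<in>C. \<Sum>j\<in>B. \<Sum>i\<in>A. (f i j k :: 'a::comm_monoid_add)) = (\<Sum>i\<in>A. \<Sum>j\<in>B. \<Sum>k\<in>C. f i j k)"
proof -
  have "(\<Sum>k\<in>C. \<Sum>j\<in>B. \<Sum>i\<in>A. f i j k) = (\<Sum>k\<in>C. \<Sum>i\<in>A. \<Sum>j\<in>B. f i j k)"
    by (rule sum_swap_in)
  also have "\<dots> = (\<Sum>i\<in>A. \<Sum>k\<in>C. \<Sum>j\<in>B. f i j k)" by (rule sum.swap)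
  also have "\<dots> = (\<Sum>i\<in>A. \<Sum>j\<in>B. \<Sum>k\<in>C. f i j k)" by (rule sum_swap_in)
  finally show ?thesis .
qed

lemma tri_sum: "tri T u v w = (\<Sum>i\<in>UNIV. \<Sum>j\<in>UNIV. \<Sum>k\<in>UNIV. u$i * v$j * w$k * T$i$j$k)"
proof -
  have "tri T u v w = (\<Sum>k\<in>UNIV. (\<Sum>j\<in>UNIV. (\<Sum>i\<in>UNIV. u$i * T$i$j$k) * v$j) * w$k)"
    by (simp add: tri_def inner_vec_def matrix_vector_mult_def Tx_def)
  also have "\<dots> = (\<Sum>k\<in>UNIV. \<Sum>j\<in>UNIV. \<Sum>i\<in>UNIV. u$i * v$j * w$k * T$i$j$k)"
    by (simp add: sum_distrib_left sum_distrib_right mult_ac)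
  also have "\<dots> = (\<Sum>i\<in>UNIV. \<Sum>j\<in>UNIV. \<Sum>k\<in>UNIV. u$i * v$j * w$k * T$i$j$k)"
    by (rule sum3_rev)
  finally show ?thesis .
qed

lemma alt3D: assumes "alt3 T" shows "T$j$i$k = - T$i$j$k" "T$i$k$j = - T$i$j$k"
  using assms unfolding alt3_def by blast+

lemma tri_swap12: assumes "alt3 T" shows "tri T v u w = - tri T u v w"
proof -
  have "tri T v u w = (\<Sum>i\<in>UNIV. \<Sum>j\<in>UNIV. \<Sum>k\<in>UNIV. v$i * u$j * w$k * T$i$j$k)" by (rule tri_sum)
  also have "\<dots> = (\<Sum>j\<in>UNIV. \<Sum>i\<in>UNIV. \<Sum>k\<in>UNIV. v$i * u$j * w$k * T$i$j$k)" by (rule sum.swap)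
  also have "\<dots> = (\<Sum>j\<in>UNIV. \<Sum>i\<in>UNIV. \<Sum>k\<in>UNIV. - (u$j * v$i * w$k * T$j$i$k))"
  proof -
    have p: "v$i * u$j * w$k * T$i$j$k = - (u$j * v$i * w$k * T$j$i$k)" for i j k
    proof -
      have "T$j$i$k = - T$i$j$k" by (rule alt3D(1)[OF assms])
      then show ?thesis by simp
    qed
    show ?thesis by (simp only: p)
  qed
  also have "\<dots> = - tri T u v w" by (simp add: tri_sum sum_negf)
  finally show ?thesis .
qed

lemma tri_swap23: assumes "alt3 T" shows "tri T u w v = - tri T u v w"
proof -
  have "tri T u w v = (\<Sum>i\<in>UNIV. \<Sum>j\<in>UNIV. \<Sum>k\<in>UNIV. u$i * w$j * v$k * T$i$j$k)" by (rule tri_sum)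
  also have "\<dots> = (\<Sum>i\<in>UNIV. \<Sum>k\<in>UNIV. \<Sum>j\<in>UNIV. u$i * w$j * v$k * T$i$j$k)" by (rule sum_swap_in)
  also have "\<dots> = (\<Sum>i\<in>UNIV. \<Sum>k\<in>UNIV. \<Sum>j\<in>UNIV. - (u$i * v$k * w$j * T$i$k$j))"
  proof -
    have p: "u$i * w$j * v$k * T$i$j$k = - (u$i * v$k * w$j * T$i$k$j)" for i j k
    proof -
      have "T$i$k$j = - T$i$j$k" by (rule alt3D(2)[OF assms])
      then show ?thesis by simp
    qed
    show ?thesis by (simp only: p)
  qed
  also have "\<dots> = - tri T u v w" by (simp add: tri_sum sum_negf)
  finally show ?thesis .
qed

lemma tri_cyc: assumes "alt3 T" shows "tri T u v w = tri T v w u"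
  using tri_swap12[OF assms] tri_swap23[OF assms] by (metis minus_minus)


lemma f2_Tx: "f2 (Tx T u) v w = tri T u v w"
  by (simp add: f2_def tri_def)


lemma ifmult1: "(if P then 1 else 0) * (x::real) = (if P then x else 0)" by simp
lemma ifmult2: "(x::real) * (if P then 1 else 0) = (if P then x else 0)" by simp
lemma mv_e: "((M::real^'n^'n) *v e j) $ k = M$k$j"
  by (simp add: matrix_vector_mult_def e_nth ifmult1 ifmult2)
lemma Tx_e: "Tx T (e i) $ k $ j = T$i$j$k"
  by (simp add: Tx_def e_nth ifmult1 ifmult2)
lemma inner_e: "x \<bullet> e k = x $ k"
  by (simp add: e_def inner_axis)
lemma tri_basis: "tri T (e i) (e j) (e k) = T$i$j$k"
  unfolding tri_def inner_e mv_e Tx_e ..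

lemma basis_exp: "u = (\<Sum>i\<in>UNIV. u$i *\<^sub>R e i)"
  using basis_expansion[of u] by (simp add: scalar_mult_eq_scaleR e_def)

lemma linear_exp: "linear f \<Longrightarrow> f u = (\<Sum>i\<in>UNIV. u$i *\<^sub>R f (e i))"
  apply (subst basis_exp[of u])
  by (simp add: linear_sum linear_scale o_def)

lemma skew_Tx: assumes "alt3 T" shows "skew (Tx T u)"
proof -
  have *: "Tx T u $ b $ a = - (Tx T u $ a $ b)" for a b
  proof -
    have "Tx T u $ b $ a = (\<Sum>i\<in>UNIV. - (u$i * T$i$b$a))"
      unfolding Tx_nth by (rule sum.cong[OF refl]) (simp add: alt3D(2)[OF assms, of _ b a])
    then show ?thesis by (simp add: sum_negf Tx_nth)
  qed
  have **: "transpose (Tx T u) $ i $ j = (- Tx T u) $ i $ j" for i j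
  proof -
    have "transpose (Tx T u) $ i $ j = Tx T u $ j $ i" by (simp add: transpose_def)
    also have "\<dots> = - (Tx T u $ i $ j)" by (rule *)
    finally show ?thesis by simp
  qed
  show ?thesis unfolding skew_def vec_eq_iff using ** by blast
qed

lemma mv_neg: "(- M) *v (y::real^'n) = - (M *v y)"
  by (simp add: vec_eq_iff matrix_vector_mult_def sum_negf)

lemma skew_inner: assumes "skew M" shows "(M *v y) \<bullet> z = - ((M *v z) \<bullet> y)"
proof -
  have "(M *v y) \<bullet> z = (y v* transpose M) \<bullet> z" by simp
  also have "\<dots> = y \<bullet> (transpose M *v z)" by (rule dot_lmul_matrix)
  also have "\<dots> = - ((M *v z) \<bullet> y)" using assms by (simp add: skew_def mv_neg inner_commute)
  finally show ?thesis .
qed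

lemma Tv_comp: "(Tx T u *v v) $ k = tri T u v (e k)"
  unfolding tri_def inner_e ..

lemma Tv_swap: assumes "alt3 T" shows "Tx T v *v u = - (Tx T u *v v)"
proof -
  have "(Tx T v *v u) $ k = (- (Tx T u *v v)) $ k" for k
    unfolding vector_uminus_component Tv_comp by (rule tri_swap12[OF assms])
  then show ?thesis by (simp add: vec_eq_iff)
qed

lemma Tx_add: "Tx T (x + y) = Tx T x + Tx T y"
  by (simp add: Tx_def vec_eq_iff algebra_simps sum.distrib)
lemma Tx_scale: "Tx T (c *\<^sub>R x) = c *\<^sub>R Tx T x"
  by (simp add: Tx_def vec_eq_iff algebra_simps sum_distrib_left)
lemma linear_Tx: "linear (Tx T)"
  by (rule linearI) (simp_all add: Tx_add Tx_scale)

lemma Tx_addT: "Tx (T + S) x = Tx T x + Tx S x"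
  by (simp add: Tx_def vec_eq_iff algebra_simps sum.distrib)
lemma Tx_diffT: "Tx (T - S) x = Tx T x - Tx S x"
  by (simp add: Tx_def vec_eq_iff algebra_simps sum_subtractf)
lemma Tx_scaleT: "Tx (c *\<^sub>R T) x = c *\<^sub>R Tx T x"
  by (simp add: Tx_def vec_eq_iff algebra_simps sum_distrib_left)
lemma Tx_zeroT: "Tx 0 x = 0"
  by (simp add: Tx_def vec_eq_iff)

lemma mm_add_r: "((A::real^'n^'n) + B) ** C = A ** C + B ** C"
  by (simp add: matrix_matrix_mult_def vec_eq_iff algebra_simps sum.distrib)
lemma mm_diff_r: "((A::real^'n^'n) - B) ** C = A ** C - B ** C"
  by (simp add: matrix_matrix_mult_def vec_eq_iff algebra_simps sum_subtractf)
lemma mm_diff_l: "(A::real^'n^'n) ** (B - C) = A ** B - A ** C"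
  by (simp add: matrix_matrix_mult_def vec_eq_iff algebra_simps sum_subtractf)
lemma mm_scale_l: "((c *\<^sub>R A)::real^'n^'n) ** B = c *\<^sub>R (A ** B)"
  by (simp add: scalar_matrix_assoc)
lemma mm_scale_r: "(A::real^'n^'n) ** (c *\<^sub>R B) = c *\<^sub>R (A ** B)"
  by (simp add: matrix_scalar_ac scalar_matrix_assoc)

lemma mv_add_r: "((A::real^'n^'n) + B) *v x = A *v x + B *v x"
  by (simp add: matrix_vector_mult_add_rdistrib)
lemma mv_scale_r: "((c *\<^sub>R A)::real^'n^'n) *v x = c *\<^sub>R (A *v x)"
  by (simp add: vec_eq_iff matrix_vector_mult_def sum_distrib_left algebra_simps)

lemma RTfun_lin1: "linear (\<lambda>u. RTfun T u v)"
proof (rule linearI)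
  fix a b
  show "RTfun T (a + b) v = RTfun T a v + RTfun T b v"
    unfolding RTfun_def Tx_add mm_add_r matrix_add_ldistrib mv_add_r
    by (simp add: algebra_simps)
next
  fix c a
  show "RTfun T (c *\<^sub>R a) v = c *\<^sub>R RTfun T a v"
    unfolding RTfun_def Tx_scale mm_scale_l mm_scale_r mv_scale_r
    by (simp add: algebra_simps)
qed

lemma RTfun_lin2: "linear (\<lambda>v. RTfun T u v)"
proof (rule linearI)
  fix a b
  show "RTfun T u (a + b) = RTfun T u a + RTfun T u b"
    unfolding RTfun_def Tx_add mm_add_r matrix_add_ldistrib matrix_vector_right_distrib Tx_add
    by (simp add: algebra_simps)
next
  fix c a
  show "RTfun T u (c *\<^sub>R a) = c *\<^sub>R RTfun T u a"
    unfolding RTfun_def Tx_scale mm_scale_l mm_scale_r matrix_vector_mult_scaleR Tx_scale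
    by (simp add: algebra_simps)
qed

lemma Rapp_RT: "Rapp (RT T) u v = RTfun T u v"
proof -
  have "RTfun T u v = (\<Sum>i\<in>UNIV. u$i *\<^sub>R RTfun T (e i) v)"
    by (rule linear_exp[OF RTfun_lin1])
  also have "\<dots> = (\<Sum>i\<in>UNIV. u$i *\<^sub>R (\<Sum>j\<in>UNIV. v$j *\<^sub>R RTfun T (e i) (e j)))"
    by (subst linear_exp[OF RTfun_lin2, of T "e _" v]) (rule refl)
  also have "\<dots> = Rapp (RT T) u v"
    by (simp add: Rapp_def RT_def scaleR_sum_right)
  finally show ?thesis by simp
qed


lemma Tx_neg: "Tx T (- x) = - Tx T x"
  by (simp add: Tx_def vec_eq_iff sum_negf)

lemma a_12: "alt3 T \<Longrightarrow> T$j$i$k = - T$i$j$k" by (rule alt3D(1))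
lemma a_23: "alt3 T \<Longrightarrow> T$i$k$j = - T$i$j$k" by (rule alt3D(2))
lemma a_cyc: assumes "alt3 T" shows "T$i$j$k = T$j$k$i"
proof -
  have "T$i$j$k = - T$j$i$k" using a_12[OF assms, of i j k] by simp
  also have "T$j$i$k = - T$j$k$i" by (rule a_23[OF assms])
  finally show ?thesis by simp
qed

lemma skew_f2: "skew M \<Longrightarrow> f2 M x y = - f2 M y x"
  unfolding f2_def by (rule skew_inner)

lemma RT_formula: assumes "alt3 T"
  shows "f2 (RTfun T u v) w z = (Tx T u *v w) \<bullet> (Tx T v *v z) - (Tx T u *v z) \<bullet> (Tx T v *v w)
           + 2 * ((Tx T u *v v) \<bullet> (Tx T w *v z))"
proof -
  let ?A = "Tx T u" and ?B = "Tx T v" and ?C = "Tx T (Tx T u *v v)"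
  have mv: "RTfun T u v *v w = ?A *v (?B *v w) - ?B *v (?A *v w) + 2 *\<^sub>R (?C *v w)"
    unfolding RTfun_def mv_add_r mv_scale_r matrix_vector_mult_diff_rdistrib matrix_vector_mul_assoc ..
  have e1: "(?A *v (?B *v w)) \<bullet> z = - ((?A *v z) \<bullet> (?B *v w))" by (rule skew_inner[OF skew_Tx[OF assms]])
  have e2: "(?B *v (?A *v w)) \<bullet> z = - ((?B *v z) \<bullet> (?A *v w))" by (rule skew_inner[OF skew_Tx[OF assms]])
  have e3: "(?C *v w) \<bullet> z = (Tx T w *v z) \<bullet> (Tx T u *v v)"
    using tri_cyc[OF assms, of "Tx T u *v v" w z] unfolding tri_def .
  have e4: "(?B *v z) \<bullet> (?A *v w) = (?A *v w) \<bullet> (?B *v z)" by (rule inner_commute)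
  have e5: "(Tx T w *v z) \<bullet> (Tx T u *v v) = (Tx T u *v v) \<bullet> (Tx T w *v z)" by (rule inner_commute)
  show ?thesis unfolding f2_def mv inner_add_left inner_diff_left inner_scaleR_left e1 e2 e3 e4 e5
    by simp
qed

lemma bianchi_vec: assumes "alt3 T"
  shows "f2 (RTfun T a X) b c - f2 (RTfun T b X) a c + f2 (RTfun T c X) a b = 0"
proof -
  have s1: "Tx T b *v a = - (Tx T a *v b)" by (rule Tv_swap[OF assms])
  have s2: "Tx T c *v a = - (Tx T a *v c)" by (rule Tv_swap[OF assms])
  have s3: "Tx T c *v b = - (Tx T b *v c)" by (rule Tv_swap[OF assms])
  have s4: "Tx T a *v X = - (Tx T X *v a)" by (rule Tv_swap[OF assms])
  have s5: "Tx T b *v X = - (Tx T X *v b)" by (rule Tv_swap[OF assms])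
  have s6: "Tx T c *v X = - (Tx T X *v c)" by (rule Tv_swap[OF assms])
  have c1: "(Tx T b *v c) \<bullet> (Tx T X *v a) = (Tx T X *v a) \<bullet> (Tx T b *v c)" by (rule inner_commute)
  have c2: "(Tx T X *v b) \<bullet> (Tx T a *v c) = (Tx T a *v c) \<bullet> (Tx T X *v b)" by (rule inner_commute)
  have c3: "(Tx T X *v c) \<bullet> (Tx T a *v b) = (Tx T a *v b) \<bullet> (Tx T X *v c)" by (rule inner_commute)
  show ?thesis unfolding RT_formula[OF assms] s1 s2 s3 s4 s5 s6 inner_minus_left inner_minus_right c1 c2 c3
    by simp
qed

lemma w12_comp: "wedge12 (e i) M $ a $ b $ c = (if a = i then f2 M (e b) (e c) else 0)
    - (if b = i then f2 M (e a) (e c) else 0) + (if c = i then f2 M (e a) (e b) else 0)"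
  by (simp add: wedge12_def e_nth)

lemma bianchi: assumes "alt3 T" shows "(\<Sum>i\<in>UNIV. wedge12 (e i) (Rapp (RT T) (e i) X)) = 0"
proof -
  have "(\<Sum>i\<in>UNIV. wedge12 (e i) (RTfun T (e i) X)) $ a $ b $ c = 0" for a b c
  proof -
    have "(\<Sum>i\<in>UNIV. wedge12 (e i) (RTfun T (e i) X)) $ a $ b $ c
        = (\<Sum>i\<in>UNIV. (if a = i then f2 (RTfun T (e i) X) (e b) (e c) else 0)
                  - (if b = i then f2 (RTfun T (e i) X) (e a) (e c) else 0)
                  + (if c = i then f2 (RTfun T (e i) X) (e a) (e b) else 0))"
      by (simp only: sum_component w12_comp)
    also have "\<dots> = f2 (RTfun T (e a) X) (e b) (e c) - f2 (RTfun T (e b) X) (e a) (e c)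
                    + f2 (RTfun T (e c) X) (e a) (e b)"
      by (simp add: sum.distrib sum_subtractf)
    also have "\<dots> = 0" by (rule bianchi_vec[OF assms])
    finally show ?thesis .
  qed
  then show ?thesis by (simp add: vec_eq_iff Rapp_RT)
qed

lemma RTfun_swap: assumes "alt3 T" shows "RTfun T v u = - RTfun T u v"
  unfolding RTfun_def Tv_swap[OF assms, of v u] Tx_neg by (simp add: algebra_simps)

lemma transpose_diff: "transpose ((A::real^'n^'n) - B) = transpose A - transpose B"
  by (simp add: transpose_def vec_eq_iff)
lemma transpose_add: "transpose ((A::real^'n^'n) + B) = transpose A + transpose B"
  by (simp add: transpose_def vec_eq_iff)
lemma mm_neg_l: "(- (A::real^'n^'n)) ** B = - (A ** B)"
  by (simp add: matrix_matrix_mult_def vec_eq_iff sum_negf)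
lemma mm_neg_r: "(A::real^'n^'n) ** (- B) = - (A ** B)"
  by (simp add: matrix_matrix_mult_def vec_eq_iff sum_negf)

lemma skew_add: "skew A \<Longrightarrow> skew B \<Longrightarrow> skew ((A::real^'n^'n) + B)"
  by (simp add: skew_def transpose_add)
lemma skew_scale: "skew A \<Longrightarrow> skew (c *\<^sub>R (A::real^'n^'n))"
  by (simp add: skew_def transpose_scalar)
lemma skew_comm: "skew A \<Longrightarrow> skew B \<Longrightarrow> skew ((A::real^'n^'n) ** B - B ** A)"
  unfolding skew_def transpose_diff matrix_transpose_mul
  by (simp add: mm_neg_l mm_neg_r)

lemma skew_RTfun: "alt3 T \<Longrightarrow> skew (RTfun T u v)"
  unfolding RTfun_def by (intro skew_add skew_comm skew_scale skew_Tx)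

lemma lieD: assumes "lie_subalgebra_so g"
  shows "subspace g" "A \<in> g \<Longrightarrow> skew A" "A \<in> g \<Longrightarrow> B \<in> g \<Longrightarrow> A ** B - B ** A \<in> g"
  using assms unfolding lie_subalgebra_so_def by blast+

lemma L3gD: assumes "T \<in> L3g g" shows "alt3 T" "Tx T X \<in> g"
  using assms unfolding L3g_def by blast+

lemma RTfun_in: assumes "lie_subalgebra_so g" "T \<in> L3g g" shows "RTfun T u v \<in> g"
  unfolding RTfun_def
  by (intro subspace_add[OF lieD(1)[OF assms(1)]] subspace_scale[OF lieD(1)[OF assms(1)]]
        lieD(3)[OF assms(1)] L3gD(2)[OF assms(2)])

lemma part1: assumes "lie_subalgebra_so g" "T \<in> L3g g" shows "RT T \<in> Kspace g"
proof -
  have a: "alt3 T" by (rule L3gD(1)[OF assms(2)])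
  have "(RT T)$j$i = - (RT T)$i$j" for i j
    unfolding RT_def by (simp add: RTfun_swap[OF a, of "e j" "e i"])
  moreover have "skew ((RT T)$i$j)" for i j
    unfolding RT_def by (simp add: skew_RTfun[OF a])
  ultimately have "L2L2 (RT T)"
    unfolding L2L2_def by blast
  then show ?thesis unfolding Kspace_def mem_Collect_eq Rapp_RT using RTfun_in[OF assms] bianchi[OF a, unfolded Rapp_RT] by blast
qed

lemma self_neg: assumes h: "(x::'a::real_vector) = - x" shows "x = 0"
proof -
  have "(2::real) *\<^sub>R x = x + x" by (rule scaleR_2)
  also have "x + x = x + - x" by (subst (2) h) (rule refl)
  also have "\<dots> = 0" by simp
  finally show "x = 0" by simp
qed

lemma part3: assumes "alt3 T" shows "RT T = 0 \<longleftrightarrow> T = 0"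
proof
  assume h: "RT T = 0"
  have "T$i$j$k = 0" for i j k
  proof -
    let ?V = "Tx T (e i) *v e j"
    have "RTfun T (e i) (e j) = 0" using h unfolding RT_def by (simp add: vec_eq_iff)
    then have "f2 (RTfun T (e i) (e j)) (e j) (e i) = 0" by (simp add: f2_def)
    moreover have s1: "Tx T (e j) *v e i = - ?V" by (rule Tv_swap[OF assms])
    moreover have "Tx T (e i) *v e i = 0" by (rule self_neg[OF Tv_swap[OF assms, of "e i" "e i"]])
    ultimately have "0 = ?V \<bullet> (- ?V) - 0 + 2 * (?V \<bullet> (- ?V))"
      unfolding RT_formula[OF assms] by simp
    then have "?V \<bullet> ?V = 0" by simp
    then have "?V = 0" by simp
    then have "?V $ k = 0" by simp
    then show ?thesis unfolding Tv_comp tri_basis .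
  qed
  then show "T = 0" by (simp add: vec_eq_iff)
next
  assume "T = 0"
  then have z: "RTfun T u v = 0" for u v by (simp add: RTfun_def Tx_zeroT)
  show "RT T = 0" by (simp add: RT_def vec_eq_iff z)
qed

lemma Omega_comp: "OmegaT T $ a $ b $ c $ d
   = (\<Sum>i\<in>UNIV. T$i$a$b*T$i$c$d - T$i$a$c*T$i$b$d + T$i$a$d*T$i$b$c)"
proof -
  have w: "wedge22 (Tx T (e i)) (Tx T (e i)) $a$b$c$d
         = 2 * (T$i$a$b*T$i$c$d - T$i$a$c*T$i$b$d + T$i$a$d*T$i$b$c)" for i
    by (simp add: wedge22_def f2_Tx tri_basis algebra_simps)
  have "OmegaT T $ a $ b $ c $ d = (1/2) * (\<Sum>i\<in>UNIV. wedge22 (Tx T (e i)) (Tx T (e i)) $a$b$c$d)"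
    by (simp add: OmegaT_def)
  also have "\<dots> = (1/2) * (\<Sum>i\<in>UNIV. 2 * (T$i$a$b*T$i$c$d - T$i$a$c*T$i$b$d + T$i$a$d*T$i$b$c))"
    by (simp only: w)
  also have "\<dots> = (\<Sum>i\<in>UNIV. T$i$a$b*T$i$c$d - T$i$a$c*T$i$b$d + T$i$a$d*T$i$b$c)"
    by (simp only: sum_distrib_left[symmetric])
  finally show ?thesis .
qed

lemma alt4_Omega: assumes "alt3 T" shows "alt4 (OmegaT T)"
  unfolding alt4_def
proof (intro allI conjI)
  fix a b c d
  show "OmegaT T $ b $ a $ c $ d = - OmegaT T $ a $ b $ c $ d"
  proof -
    have "OmegaT T $ b $ a $ c $ d = (\<Sum>i\<in>UNIV. - (T$i$a$b*T$i$c$d - T$i$a$c*T$i$b$d + T$i$a$d*T$i$b$c))"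
      unfolding Omega_comp
    proof (rule sum.cong[OF refl])
      fix i
      have "T$i$b$a = - T$i$a$b" by (rule a_23[OF assms])
      then show "T$i$b$a*T$i$c$d - T$i$b$c*T$i$a$d + T$i$b$d*T$i$a$c
          = - (T$i$a$b*T$i$c$d - T$i$a$c*T$i$b$d + T$i$a$d*T$i$b$c)" by (simp add: algebra_simps)
    qed
    also have "\<dots> = - (\<Sum>i\<in>UNIV. T$i$a$b*T$i$c$d - T$i$a$c*T$i$b$d + T$i$a$d*T$i$b$c)"
      by (rule sum_negf)
    also have "\<dots> = - OmegaT T $ a $ b $ c $ d" by (simp only: Omega_comp)
    finally show ?thesis .
  qed
  show "OmegaT T $ a $ c $ b $ d = - OmegaT T $ a $ b $ c $ d"
  proof -
    have "OmegaT T $ a $ c $ b $ d = (\<Sum>i\<in>UNIV. - (T$i$a$b*T$i$c$d - T$i$a$c*T$i$b$d + T$i$a$d*T$i$b$c))"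
      unfolding Omega_comp
    proof (rule sum.cong[OF refl])
      fix i
      have "T$i$c$b = - T$i$b$c" by (rule a_23[OF assms])
      then show "T$i$a$c*T$i$b$d - T$i$a$b*T$i$c$d + T$i$a$d*T$i$c$b
          = - (T$i$a$b*T$i$c$d - T$i$a$c*T$i$b$d + T$i$a$d*T$i$b$c)" by (simp add: algebra_simps)
    qed
    also have "\<dots> = - (\<Sum>i\<in>UNIV. T$i$a$b*T$i$c$d - T$i$a$c*T$i$b$d + T$i$a$d*T$i$b$c)"
      by (rule sum_negf)
    also have "\<dots> = - OmegaT T $ a $ b $ c $ d" by (simp only: Omega_comp)
    finally show ?thesis .
  qed
  show "OmegaT T $ a $ b $ d $ c = - OmegaT T $ a $ b $ c $ d"
  proof -
    have "OmegaT T $ a $ b $ d $ c = (\<Sum>i\<in>UNIV. - (T$i$a$b*T$i$c$d - T$i$a$c*T$i$b$d + T$i$a$d*T$i$b$c))"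
      unfolding Omega_comp
    proof (rule sum.cong[OF refl])
      fix i
      have "T$i$d$c = - T$i$c$d" by (rule a_23[OF assms])
      then show "T$i$a$b*T$i$d$c - T$i$a$d*T$i$b$c + T$i$a$c*T$i$b$d
          = - (T$i$a$b*T$i$c$d - T$i$a$c*T$i$b$d + T$i$a$d*T$i$b$c)" by (simp add: algebra_simps)
    qed
    also have "\<dots> = - (\<Sum>i\<in>UNIV. T$i$a$b*T$i$c$d - T$i$a$c*T$i$b$d + T$i$a$d*T$i$b$c)"
      by (rule sum_negf)
    also have "\<dots> = - OmegaT T $ a $ b $ c $ d" by (simp only: Omega_comp)
    finally show ?thesis .
  qed
qed

lemma sum_e: "(\<Sum>l\<in>UNIV. e b $ l * (f l::real)) = f b"
  by (simp add: e_nth ifmult1)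

lemma ins2_basis: "ins2 B (e b) (e a) $ k $ j = B$a$b$j$k"
proof -
  have "ins2 B (e b) (e a) $ k $ j = (\<Sum>a'\<in>UNIV. \<Sum>b'\<in>UNIV. e a $ a' * e b $ b' * B$a'$b'$j$k)"
    by (simp add: ins2_def)
  also have "\<dots> = (\<Sum>a'\<in>UNIV. e a $ a' * (\<Sum>b'\<in>UNIV. e b $ b' * B$a'$b'$j$k))"
    by (simp add: sum_distrib_left mult.assoc)
  also have "\<dots> = (\<Sum>a'\<in>UNIV. e a $ a' * B$a'$b$j$k)"
    by (simp only: sum_e)
  also have "\<dots> = B$a$b$j$k" by (rule sum_e)
  finally show ?thesis .
qed

lemma ins2_exp: "ins2 B X Y = (\<Sum>a\<in>UNIV. \<Sum>b\<in>UNIV. (Y$a * X$b) *\<^sub>R ins2 B (e b) (e a))"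
  by (simp add: vec_eq_iff ins2_basis) (simp add: ins2_def)

lemma Omega_ins2_basis: assumes "alt3 T"
  shows "ins2 (OmegaT T) (e b) (e a)
       = Tx T (e b) ** Tx T (e a) - Tx T (e a) ** Tx T (e b) + Tx T (Tx T (e a) *v e b)"
proof -
  have "ins2 (OmegaT T) (e b) (e a) $ k $ j
       = (Tx T (e b) ** Tx T (e a) - Tx T (e a) ** Tx T (e b) + Tx T (Tx T (e a) *v e b)) $ k $ j" for k j
  proof -
    have "ins2 (OmegaT T) (e b) (e a) $ k $ j
        = (\<Sum>i\<in>UNIV. T$i$a$b*T$i$j$k - T$i$a$j*T$i$b$k + T$i$a$k*T$i$b$j)"
      by (simp only: ins2_basis Omega_comp)
    also have "\<dots> = (\<Sum>i\<in>UNIV. T$b$i$k*T$a$j$i - T$a$i$k*T$b$j$i + T$a$b$i*T$i$j$k)"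
    proof (rule sum.cong[OF refl])
      fix i
      have f1: "T$i$a$b = T$a$b$i" by (rule a_cyc[OF assms])
      have f2: "T$b$i$k = - T$i$b$k" by (rule a_12[OF assms])
      have f3: "T$i$a$j = T$a$j$i" by (rule a_cyc[OF assms])
      have f4: "T$a$i$k = - T$i$a$k" by (rule a_12[OF assms])
      have f5: "T$i$b$j = T$b$j$i" by (rule a_cyc[OF assms])
      show "T$i$a$b*T$i$j$k - T$i$a$j*T$i$b$k + T$i$a$k*T$i$b$j
          = T$b$i$k*T$a$j$i - T$a$i$k*T$b$j$i + T$a$b$i*T$i$j$k"
        unfolding f1 f2 f3 f4 f5 by (simp add: algebra_simps)
    qed
    also have "\<dots> = (\<Sum>i\<in>UNIV. T$b$i$k*T$a$j$i) - (\<Sum>i\<in>UNIV. T$a$i$k*T$b$j$i)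
                   + (\<Sum>i\<in>UNIV. T$a$b$i*T$i$j$k)"
      by (simp add: sum.distrib sum_subtractf)
    also have "\<dots> = (Tx T (e b) ** Tx T (e a) - Tx T (e a) ** Tx T (e b) + Tx T (Tx T (e a) *v e b)) $ k $ j"
      by (simp add: matrix_matrix_mult_def Tx_nth mv_e sum_e)
    finally show ?thesis .
  qed
  then show ?thesis by (simp add: vec_eq_iff)
qed

lemma part2: assumes "lie_subalgebra_so g" "T \<in> L3g g" shows "OmegaT T \<in> L4g g"
proof -
  have a: "alt3 T" by (rule L3gD(1)[OF assms(2)])
  have sub: "subspace g" by (rule lieD(1)[OF assms(1)])
  have "ins2 (OmegaT T) X Y \<in> g" for X Y
    unfolding ins2_exp[of "OmegaT T" X Y] Omega_ins2_basis[OF a]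
    by (intro subspace_sum[OF sub] subspace_scale[OF sub] subspace_add[OF sub]
        lieD(3)[OF assms(1)] L3gD(2)[OF assms(2)])
  then show ?thesis unfolding L4g_def using alt4_Omega[OF a] by simp
qed


lemma f2_e: "f2 M (e j) (e k) = M$k$j"
  unfolding f2_def inner_e mv_e ..

lemma f2_add: "f2 (M + N) x y = f2 M x y + f2 N x y"
  by (simp add: f2_def mv_add_r inner_add_left)
lemma f2_diff: "f2 (M - N) x y = f2 M x y - f2 N x y"
  by (simp add: f2_def matrix_vector_mult_diff_rdistrib inner_diff_left)
lemma f2_scale: "f2 (c *\<^sub>R M) x y = c * f2 M x y"
  by (simp add: f2_def mv_scale_r)
lemma f2_zero: "f2 0 x y = 0"
  by (simp add: f2_def)

lemma Rapp_diff: "Rapp (R1 - R2) X Y = Rapp R1 X Y - Rapp R2 X Y"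
  by (simp add: Rapp_def scaleR_diff_right sum_subtractf)
lemma Rapp_add: "Rapp (R1 + R2) X Y = Rapp R1 X Y + Rapp R2 X Y"
  by (simp add: Rapp_def scaleR_add_right sum.distrib)
lemma Rapp_scale: "Rapp (c *\<^sub>R R) X Y = c *\<^sub>R Rapp R X Y"
  by (simp add: Rapp_def scaleR_sum_right ac_simps)
lemma Rapp_zero: "Rapp 0 X Y = 0"
  by (simp add: Rapp_def)

lemma wedge12_add: "wedge12 a (M + N) = wedge12 a M + wedge12 a N"
  by (simp add: wedge12_def f2_add vec_eq_iff algebra_simps)
lemma wedge12_scale: "wedge12 a (c *\<^sub>R M) = c *\<^sub>R wedge12 a M"
  by (simp add: wedge12_def f2_scale vec_eq_iff algebra_simps)
lemma wedge12_zero: "wedge12 a 0 = 0"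
  by (simp add: wedge12_def f2_zero vec_eq_iff)

lemma skew_zero: "skew (0::real^'n^'n)"
  by (simp add: skew_def transpose_def vec_eq_iff)

lemma L2L2_add: assumes "L2L2 R1" "L2L2 R2" shows "L2L2 (R1 + R2)"
proof -
  have "(R1 + R2)$j$i = - (R1 + R2)$i$j" for i j
  proof -
    have "R1$j$i = - R1$i$j" "R2$j$i = - R2$i$j" using assms unfolding L2L2_def by blast+
    then show ?thesis by simp
  qed
  moreover have "skew ((R1 + R2)$i$j)" for i j
  proof -
    have "skew (R1$i$j)" "skew (R2$i$j)" using assms unfolding L2L2_def by blast+
    then show ?thesis by (simp add: skew_add)
  qed
  ultimately show ?thesis unfolding L2L2_def by blast
qed

lemma L2L2_scale: assumes "L2L2 R" shows "L2L2 (c *\<^sub>R R)"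
proof -
  have "(c *\<^sub>R R)$j$i = - (c *\<^sub>R R)$i$j" for i j
  proof -
    have "R$j$i = - R$i$j" using assms unfolding L2L2_def by blast
    then show ?thesis by simp
  qed
  moreover have "skew ((c *\<^sub>R R)$i$j)" for i j
  proof -
    have "skew (R$i$j)" using assms unfolding L2L2_def by blast
    then show ?thesis by (simp add: skew_scale)
  qed
  ultimately show ?thesis unfolding L2L2_def by blast
qed

lemma L2L2_zero: "L2L2 0"
  unfolding L2L2_def by (simp add: skew_zero)

lemma Kspace_subspace: assumes "lie_subalgebra_so g" shows "subspace (Kspace g)"
proof -
  have sub: "subspace g" by (rule lieD(1)[OF assms])
  have z: "0 \<in> Kspace g"
    unfolding Kspace_def mem_Collect_eq
    by (simp add: L2L2_zero Rapp_zero wedge12_zero subspace_0[OF sub])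
  have a: "R1 + R2 \<in> Kspace g" if "R1 \<in> Kspace g" "R2 \<in> Kspace g" for R1 R2
  proof -
    have h: "L2L2 R1" "L2L2 R2" "\<And>X Y. Rapp R1 X Y \<in> g" "\<And>X Y. Rapp R2 X Y \<in> g"
      "\<And>X. (\<Sum>i\<in>UNIV. wedge12 (e i) (Rapp R1 (e i) X)) = 0"
      "\<And>X. (\<Sum>i\<in>UNIV. wedge12 (e i) (Rapp R2 (e i) X)) = 0"
      using that unfolding Kspace_def by auto
    have "L2L2 (R1 + R2)" by (rule L2L2_add[OF h(1,2)])
    moreover have "Rapp (R1 + R2) X Y \<in> g" for X Y
      unfolding Rapp_add by (rule subspace_add[OF sub h(3) h(4)])
    moreover have "(\<Sum>i\<in>UNIV. wedge12 (e i) (Rapp (R1 + R2) (e i) X)) = 0" for X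
      unfolding Rapp_add wedge12_add sum.distrib h(5) h(6) by simp
    ultimately show ?thesis unfolding Kspace_def by blast
  qed
  have s: "c *\<^sub>R R \<in> Kspace g" if "R \<in> Kspace g" for c R
  proof -
    have h: "L2L2 R" "\<And>X Y. Rapp R X Y \<in> g"
      "\<And>X. (\<Sum>i\<in>UNIV. wedge12 (e i) (Rapp R (e i) X)) = 0"
      using that unfolding Kspace_def by auto
    have "L2L2 (c *\<^sub>R R)" by (rule L2L2_scale[OF h(1)])
    moreover have "Rapp (c *\<^sub>R R) X Y \<in> g" for X Y
      unfolding Rapp_scale by (rule subspace_scale[OF sub h(2)])
    moreover have "(\<Sum>i\<in>UNIV. wedge12 (e i) (Rapp (c *\<^sub>R R) (e i) X)) = 0" for X
      unfolding Rapp_scale wedge12_scale scaleR_sum_right[symmetric] h(3) by simp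
    ultimately show ?thesis unfolding Kspace_def by blast
  qed
  show ?thesis unfolding subspace_def using z a s by blast
qed

definition act :: "real^'n^'n \<Rightarrow> real^'n^'n^'n \<Rightarrow> real^'n^'n^'n" where
  "act A T = (\<chi> i j k. f2 (A ** Tx T (e i) - Tx T (e i) ** A - Tx T (A *v e i)) (e j) (e k))"

definition actF :: "real^'n^'n \<Rightarrow> real^'n^'n^'n \<Rightarrow> real^'n \<Rightarrow> real^'n^'n" where
  "actF A T X = A ** Tx T X - Tx T X ** A - Tx T (A *v X)"

lemma actF_lin: "linear (actF A T)"
proof (rule linearI)
  fix x y
  show "actF A T (x + y) = actF A T x + actF A T y"
    unfolding actF_def Tx_add matrix_add_ldistrib mm_add_r matrix_vector_right_distrib Tx_add
    by (simp add: algebra_simps)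
next
  fix c x
  show "actF A T (c *\<^sub>R x) = c *\<^sub>R actF A T x"
    unfolding actF_def Tx_scale mm_scale_l mm_scale_r matrix_vector_mult_scaleR Tx_scale
    by (simp add: algebra_simps)
qed

lemma Tx_act: "Tx (act A T) X = actF A T X"
proof -
  have "Tx (act A T) X $ k $ j = actF A T X $ k $ j" for k j
  proof -
    have "actF A T X $ k $ j = (\<Sum>i\<in>UNIV. X$i *\<^sub>R actF A T (e i)) $ k $ j"
      by (subst linear_exp[OF actF_lin]) (rule refl)
    also have "\<dots> = (\<Sum>i\<in>UNIV. X$i * actF A T (e i) $ k $ j)" by simp
    also have "\<dots> = Tx (act A T) X $ k $ j"
      by (simp add: Tx_nth act_def f2_e actF_def)
    finally show ?thesis by simp
  qed
  then show ?thesis by (simp add: vec_eq_iff)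
qed

lemma f2_actF: assumes "skew A"
  shows "f2 (actF A T X) y z = - tri T X y (A *v z) - tri T X (A *v y) z - tri T (A *v X) y z"
proof -
  have "f2 (actF A T X) y z = (A *v (Tx T X *v y)) \<bullet> z - (Tx T X *v (A *v y)) \<bullet> z - (Tx T (A *v X) *v y) \<bullet> z"
    unfolding actF_def f2_def matrix_vector_mult_diff_rdistrib inner_diff_left matrix_vector_mul_assoc ..
  also have "(A *v (Tx T X *v y)) \<bullet> z = - ((A *v z) \<bullet> (Tx T X *v y))" by (rule skew_inner[OF assms])
  also have "(A *v z) \<bullet> (Tx T X *v y) = tri T X y (A *v z)" by (simp add: tri_def inner_commute)
  finally show ?thesis by (simp add: tri_def)
qed

lemma act_comp: "act A T $ i $ j $ k = f2 (actF A T (e i)) (e j) (e k)"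
  by (simp add: act_def actF_def)

lemma alt3_act: assumes "skew A" "alt3 T" shows "alt3 (act A T)"
  unfolding alt3_def act_comp f2_actF[OF assms(1)]
proof (intro allI conjI)
  fix i j k
  show "- tri T (e j) (e i) (A *v e k) - tri T (e j) (A *v e i) (e k) - tri T (A *v e j) (e i) (e k) =
        - (- tri T (e i) (e j) (A *v e k) - tri T (e i) (A *v e j) (e k) - tri T (A *v e i) (e j) (e k))"
    using tri_swap12[OF assms(2), of "e j" "e i" "A *v e k"] tri_swap12[OF assms(2), of "e j" "A *v e i" "e k"]
      tri_swap12[OF assms(2), of "A *v e j" "e i" "e k"] by simp
  show "- tri T (e i) (e k) (A *v e j) - tri T (e i) (A *v e k) (e j) - tri T (A *v e i) (e k) (e j) =
        - (- tri T (e i) (e j) (A *v e k) - tri T (e i) (A *v e j) (e k) - tri T (A *v e i) (e j) (e k))"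
    using tri_swap23[OF assms(2), of "e i" "e k" "A *v e j"] tri_swap23[OF assms(2), of "e i" "A *v e k" "e j"]
      tri_swap23[OF assms(2), of "A *v e i" "e k" "e j"] by simp
qed

lemma act_L3g: assumes "lie_subalgebra_so g" "T \<in> L3g g" "A \<in> g" shows "act A T \<in> L3g g"
proof -
  have sub: "subspace g" by (rule lieD(1)[OF assms(1)])
  have "Tx (act A T) X \<in> g" for X
    unfolding Tx_act actF_def
    by (intro subspace_diff[OF sub] lieD(3)[OF assms(1)] assms(3) L3gD(2)[OF assms(2)])
  then show ?thesis unfolding L3g_def
    using alt3_act[OF lieD(2)[OF assms(1) assms(3)] L3gD(1)[OF assms(2)]] by simp
qed

lemma L3g_add: assumes "lie_subalgebra_so g" "T \<in> L3g g" "S \<in> L3g g" shows "T + S \<in> L3g g"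
proof -
  have aT: "alt3 T" by (rule L3gD(1)[OF assms(2)])
  have aS: "alt3 S" by (rule L3gD(1)[OF assms(3)])
  have "alt3 (T + S)" unfolding alt3_def
  proof (intro allI conjI)
    fix i j k
    have "T$j$i$k = - T$i$j$k" "S$j$i$k = - S$i$j$k" by (rule a_12[OF aT], rule a_12[OF aS])
    then show "(T + S)$j$i$k = - (T + S)$i$j$k" by simp
    have "T$i$k$j = - T$i$j$k" "S$i$k$j = - S$i$j$k" by (rule a_23[OF aT], rule a_23[OF aS])
    then show "(T + S)$i$k$j = - (T + S)$i$j$k" by simp
  qed
  moreover have "Tx (T + S) X \<in> g" for X
    unfolding Tx_addT by (intro subspace_add[OF lieD(1)[OF assms(1)]] L3gD(2)[OF assms(2)] L3gD(2)[OF assms(3)])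
  ultimately show ?thesis unfolding L3g_def by simp
qed

lemma inner2_e: "inner2 M N = (1/2) * (\<Sum>i\<in>UNIV. \<Sum>j\<in>UNIV. M$j$i * N$j$i)"
  by (simp add: inner2_def f2_e)

lemma inner2_trace: "inner2 M N = (1/2) * trace (transpose M ** N)"
  by (simp add: inner2_e trace_def matrix_matrix_mult_def transpose_def)

lemma inner2_add_l: "inner2 (M + N) P = inner2 M P + inner2 N P"
  by (simp add: inner2_e algebra_simps sum.distrib)
lemma inner2_add_r: "inner2 P (M + N) = inner2 P M + inner2 P N"
  by (simp add: inner2_e algebra_simps sum.distrib)
lemma inner2_scale_l: "inner2 (c *\<^sub>R M) P = c * inner2 M P"
  by (simp add: inner2_e sum_distrib_left algebra_simps)
lemma inner2_scale_r: "inner2 P (c *\<^sub>R M) = c * inner2 P M"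
  by (simp add: inner2_e sum_distrib_left algebra_simps)
lemma inner2_diff_l: "inner2 (M - N) P = inner2 M P - inner2 N P"
  by (simp add: inner2_e algebra_simps sum_subtractf)
lemma inner2_diff_r: "inner2 P (M - N) = inner2 P M - inner2 P N"
  by (simp add: inner2_e algebra_simps sum_subtractf)
lemma inner2_comm: "inner2 M N = inner2 N M"
  by (simp add: inner2_e mult.commute)

lemma trace_neg: "trace (- (A::real^'n^'n)) = - trace A"
  by (simp add: trace_def sum_negf)

lemma inner2_ad: assumes "skew A"
  shows "inner2 M (A ** N - N ** A) + inner2 (A ** M - M ** A) N = 0"
proof -
  have tA: "transpose A = - A" using assms by (simp add: skew_def)
  have tr: "transpose (A ** M - M ** A) = - (transpose M ** A) + A ** transpose M"
    unfolding transpose_diff matrix_transpose_mul tA mm_neg_l mm_neg_r by simp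
  have t1: "inner2 M (A ** N - N ** A)
      = (1/2) * (trace (transpose M ** (A ** N)) - trace (transpose M ** (N ** A)))"
    unfolding inner2_trace mm_diff_l trace_sub ..
  have t2: "inner2 (A ** M - M ** A) N
      = (1/2) * (- trace (transpose M ** A ** N) + trace (A ** transpose M ** N))"
    unfolding inner2_trace tr mm_add_r mm_neg_l trace_add trace_neg ..
  have t3: "trace (A ** transpose M ** N) = trace (transpose M ** (N ** A))"
    by (metis matrix_mul_assoc trace_mul_sym)
  have t4: "trace (transpose M ** (A ** N)) = trace (transpose M ** A ** N)"
    by (simp add: matrix_mul_assoc)
  show ?thesis unfolding t1 t2 t3 t4 by (simp add: algebra_simps)
qed

definition Sf :: "real^'n^'n^'n \<Rightarrow> real^'n \<Rightarrow> real^'n \<Rightarrow> real" where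
  "Sf T X Y = inner2 (Tx T X) (Tx T Y)"

lemma Sf_comm: "Sf T X Y = Sf T Y X"
  by (simp add: Sf_def inner2_comm)

lemma Sf_lin1: "linear (\<lambda>X. Sf T X Y)"
  by (rule linearI) (simp_all add: Sf_def Tx_add Tx_scale inner2_add_l inner2_scale_l)

lemma Sf_lin2: "linear (\<lambda>Y. Sf T X Y)"
  by (rule linearI) (simp_all add: Sf_def Tx_add Tx_scale inner2_add_r inner2_scale_r)

lemma Sf_exp1: "Sf T X Y = (\<Sum>i\<in>UNIV. X$i * Sf T (e i) Y)"
  using linear_exp[OF Sf_lin1[of T Y], of X] by simp

lemma Sf_exp2: "Sf T X Y = (\<Sum>i\<in>UNIV. Y$i * Sf T X (e i))"
  using linear_exp[OF Sf_lin2[of T X], of Y] by simp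

lemma Ric_pt: assumes "alt3 T"
  shows "f2 (RTfun T (e i) X) Y (e i) = -3 * ((Tx T (e i) *v X) \<bullet> (Tx T (e i) *v Y))"
proof -
  have s1: "Tx T X *v e i = - (Tx T (e i) *v X)" by (rule Tv_swap[OF assms])
  have s2: "Tx T Y *v e i = - (Tx T (e i) *v Y)" by (rule Tv_swap[OF assms])
  have s3: "Tx T (e i) *v e i = 0" by (rule self_neg[OF Tv_swap[OF assms, of "e i" "e i"]])
  have c: "(Tx T (e i) *v Y) \<bullet> (Tx T (e i) *v X) = (Tx T (e i) *v X) \<bullet> (Tx T (e i) *v Y)"
    by (rule inner_commute)
  show ?thesis unfolding RT_formula[OF assms] s1 s2 s3 inner_minus_right c by simp
qed

lemma Ric: assumes "alt3 T"
  shows "(\<Sum>i\<in>UNIV. f2 (RTfun T (e i) X) Y (e i)) = -6 * Sf T X Y"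
proof -
  have "(\<Sum>i\<in>UNIV. f2 (RTfun T (e i) X) Y (e i))
      = -3 * (\<Sum>i\<in>UNIV. (Tx T (e i) *v X) \<bullet> (Tx T (e i) *v Y))"
    by (simp add: Ric_pt[OF assms] sum_distrib_left)
  also have "(\<Sum>i\<in>UNIV. (Tx T (e i) *v X) \<bullet> (Tx T (e i) *v Y))
      = (\<Sum>i\<in>UNIV. \<Sum>k\<in>UNIV. tri T (e i) X (e k) * tri T (e i) Y (e k))"
    by (simp add: inner_vec_def Tv_comp)
  also have "\<dots> = (\<Sum>i\<in>UNIV. \<Sum>k\<in>UNIV. tri T X (e i) (e k) * tri T Y (e i) (e k))"
  proof (intro sum.cong refl)
    fix i k
    have "tri T X (e i) (e k) = - tri T (e i) X (e k)"
      using tri_cyc[OF assms, of X "e i" "e k"] tri_swap23[OF assms, of "e i" "e k" X] by simp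
    moreover have "tri T Y (e i) (e k) = - tri T (e i) Y (e k)"
      using tri_cyc[OF assms, of Y "e i" "e k"] tri_swap23[OF assms, of "e i" "e k" Y] by simp
    ultimately show "tri T (e i) X (e k) * tri T (e i) Y (e k) = tri T X (e i) (e k) * tri T Y (e i) (e k)"
      by simp
  qed
  also have "\<dots> = 2 * Sf T X Y"
    by (simp add: Sf_def inner2_def f2_Tx)
  finally show ?thesis by simp
qed

lemma normsq3_pos: assumes "T \<noteq> 0" shows "normsq3 T > 0"
proof -
  obtain i j k where ne: "T$i$j$k \<noteq> 0" using assms by (auto simp: vec_eq_iff)
  have "0 < (T$i$j$k)^2" using ne by simp
  also have "(T$i$j$k)^2 \<le> (\<Sum>k\<in>UNIV. (T$i$j$k)^2)" by (rule member_le_sum) auto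
  also have "\<dots> \<le> (\<Sum>j\<in>UNIV. \<Sum>k\<in>UNIV. (T$i$j$k)^2)"
    by (rule member_le_sum[of j UNIV "\<lambda>j. \<Sum>k\<in>UNIV. (T$i$j$k)^2"]) (auto intro: sum_nonneg)
  also have "\<dots> \<le> (\<Sum>i\<in>UNIV. \<Sum>j\<in>UNIV. \<Sum>k\<in>UNIV. (T$i$j$k)^2)"
    by (rule member_le_sum[of i UNIV "\<lambda>i. \<Sum>j\<in>UNIV. \<Sum>k\<in>UNIV. (T$i$j$k)^2"]) (auto intro!: sum_nonneg)
  finally show ?thesis unfolding normsq3_def by simp
qed

lemma trace_Sf: "(\<Sum>j\<in>UNIV. Sf T (e j) (e j)) = 3 * normsq3 T"
  by (simp add: Sf_def inner2_e Tx_e normsq3_def power2_eq_square sum_distrib_left)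


lemma RTfun_diff_T: "RTfun (T + S) X Y - RTfun T X Y - RTfun S X Y = Rapp (RT (T + S) - RT T - RT S) X Y"
  by (simp add: Rapp_diff Rapp_RT)

lemma Sf_polar: assumes "skew A"
  shows "Sf (T + act A T) X Y - Sf T X Y - Sf (act A T) X Y = - Sf T X (A *v Y) - Sf T (A *v X) Y"
proof -
  have "Sf (T + act A T) X Y - Sf T X Y - Sf (act A T) X Y
      = inner2 (Tx T X) (actF A T Y) + inner2 (actF A T X) (Tx T Y)"
    unfolding Sf_def Tx_addT Tx_act inner2_add_l inner2_add_r by simp
  also have "\<dots> = (inner2 (Tx T X) (A ** Tx T Y - Tx T Y ** A) + inner2 (A ** Tx T X - Tx T X ** A) (Tx T Y))
       - Sf T X (A *v Y) - Sf T (A *v X) Y"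
    unfolding actF_def inner2_diff_l inner2_diff_r Sf_def by simp
  also have "\<dots> = - Sf T X (A *v Y) - Sf T (A *v X) Y"
    using inner2_ad[OF assms] by simp
  finally show ?thesis .
qed

lemma one_dim: assumes "subspace K" "dim K = 1" "v \<in> K" "v \<noteq> (0::'a::euclidean_space)" "w \<in> K"
  shows "\<exists>c. w = c *\<^sub>R v"
proof -
  have "{v} \<subseteq> K" using assms(3) by simp
  moreover have "dim K \<le> dim {v}" using assms(2,4) by simp
  ultimately have sp: "span {v} = span K" by (rule dim_eq_span)
  have "w \<in> span K" by (rule span_base[OF assms(5)])
  then have "w \<in> span {v}" using sp by simp
  then show ?thesis by (auto simp: span_singleton)
qed

lemma Sf_Ae: "Sf T ((A::real^'n^'n) *v e j) Y = (\<Sum>i\<in>UNIV. A$i$j * Sf T (e i) Y)"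
  by (subst Sf_exp1) (simp add: mv_e)

lemma skew_entry: assumes "skew A" shows "A$i$j = - A$j$i"
proof -
  have "transpose A = - A" using assms by (simp add: skew_def)
  then have "transpose A $ j $ i = (- A) $ j $ i" by simp
  then show ?thesis by (simp add: transpose_def)
qed

lemma antisym_sum_zero:
  assumes "\<And>i j. f i j = - f j i"
  shows "(\<Sum>i\<in>UNIV. \<Sum>j\<in>(UNIV::'n::finite set). (f i j :: real)) = 0"
proof -
  have "(\<Sum>i\<in>UNIV. \<Sum>j\<in>(UNIV::'n set). f i j) = (\<Sum>j\<in>UNIV. \<Sum>i\<in>(UNIV::'n set). f i j)"
    by (rule sum.swap)
  also have "\<dots> = (\<Sum>j\<in>UNIV. \<Sum>i\<in>(UNIV::'n set). - f j i)"
    by (intro sum.cong refl) (rule assms)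
  also have "\<dots> = - (\<Sum>j\<in>UNIV. \<Sum>i\<in>(UNIV::'n set). f j i)" by (simp add: sum_negf)
  finally show ?thesis by simp
qed

lemma invariance:
  assumes lie: "lie_subalgebra_so g" and T: "T \<in> L3g g" and dim: "dim (Kspace g) = 1"
    and nz: "T \<noteq> 0" and A: "A \<in> g"
  shows "Sf T (A *v X) Y + Sf T X (A *v Y) = 0"
proof -
  have a: "alt3 T" by (rule L3gD(1)[OF T])
  have sA: "skew A" by (rule lieD(2)[OF lie A])
  let ?S = "act A T"
  have S: "?S \<in> L3g g" by (rule act_L3g[OF lie T A])
  have TS: "T + ?S \<in> L3g g" by (rule L3g_add[OF lie T S])
  have aS: "alt3 ?S" by (rule L3gD(1)[OF S])
  have aTS: "alt3 (T + ?S)" by (rule L3gD(1)[OF TS])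
  have Ksub: "subspace (Kspace g)" by (rule Kspace_subspace[OF lie])
  have D: "RT (T + ?S) - RT T - RT ?S \<in> Kspace g"
    by (intro subspace_diff[OF Ksub] part1[OF lie] TS T S)
  have RTnz: "RT T \<noteq> 0" using part3[OF a] nz by simp
  obtain c where c: "RT (T + ?S) - RT T - RT ?S = c *\<^sub>R RT T"
    using one_dim[OF Ksub dim part1[OF lie T] RTnz D] by blast
  have eq: "Sf T (A *v X) Y + Sf T X (A *v Y) = - c * Sf T X Y" for X Y
  proof -
    have "(\<Sum>i\<in>UNIV. f2 (RTfun (T + ?S) (e i) X - RTfun T (e i) X - RTfun ?S (e i) X) Y (e i))
        = (\<Sum>i\<in>UNIV. f2 (c *\<^sub>R RTfun T (e i) X) Y (e i))"
      unfolding RTfun_diff_T c Rapp_scale Rapp_RT ..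
    then have "-6 * Sf (T + ?S) X Y - -6 * Sf T X Y - -6 * Sf ?S X Y = c * (-6 * Sf T X Y)"
      unfolding f2_diff f2_scale sum_subtractf sum_distrib_left[symmetric] Ric[OF aTS] Ric[OF a] Ric[OF aS] .
    then have "Sf (T + ?S) X Y - Sf T X Y - Sf ?S X Y = c * Sf T X Y" by simp
    then show ?thesis unfolding Sf_polar[OF sA] by simp
  qed
  have c0: "c = 0"
  proof -
    have p: "Sf T (e j) (A *v e j) = Sf T (A *v e j) (e j)" for j by (rule Sf_comm)
    have "(\<Sum>j\<in>UNIV. Sf T (A *v e j) (e j) + Sf T (e j) (A *v e j)) = - c * (\<Sum>j\<in>UNIV. Sf T (e j) (e j))"
      by (simp add: eq sum_distrib_left)
    moreover have "(\<Sum>j\<in>UNIV. Sf T (A *v e j) (e j) + Sf T (e j) (A *v e j))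
        = (\<Sum>j\<in>UNIV. Sf T (A *v e j) (e j) + Sf T (A *v e j) (e j))"
      by (simp only: p)
    moreover have "\<dots> = (\<Sum>j\<in>UNIV. 2 * (\<Sum>i\<in>UNIV. A$i$j * Sf T (e i) (e j)))"
      by (simp only: Sf_Ae mult_2[symmetric])
    moreover have "\<dots> = 2 * (\<Sum>j\<in>UNIV. \<Sum>i\<in>UNIV. A$i$j * Sf T (e i) (e j))"
      by (simp only: sum_distrib_left)
    moreover have "(\<Sum>j\<in>UNIV. \<Sum>i\<in>UNIV. A$i$j * Sf T (e i) (e j)) = 0"
    proof (rule antisym_sum_zero)
      fix j i
      have "A$i$j = - A$j$i" by (rule skew_entry[OF sA])
      moreover have "Sf T (e i) (e j) = Sf T (e j) (e i)" by (rule Sf_comm)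
      ultimately show "A$i$j * Sf T (e i) (e j) = - (A$j$i * Sf T (e j) (e i))" by simp
    qed
    ultimately have "c * (3 * normsq3 T) = 0" by (simp add: trace_Sf)
    then show ?thesis using normsq3_pos[OF nz] by simp
  qed
  show ?thesis using eq[of X Y] c0 by simp
qed


definition svec :: "real^'n^'n^'n \<Rightarrow> real^'n \<Rightarrow> real^'n" where
  "svec T Y = (\<chi> k. Sf T (e k) Y)"

lemma Sf_svec: "Sf T X Y = X \<bullet> svec T Y"
  by (subst Sf_exp1) (simp add: svec_def inner_vec_def)

lemma Sf_add2: "Sf T X (a + b) = Sf T X a + Sf T X b"
  by (simp add: Sf_def Tx_add inner2_add_r)
lemma Sf_scale2: "Sf T X (c *\<^sub>R a) = c * Sf T X a"
  by (simp add: Sf_def Tx_scale inner2_scale_r)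

lemma svec_lin: "linear (svec T)"
  by (rule linearI) (simp_all add: svec_def vec_eq_iff Sf_add2 Sf_scale2)

lemma svec_comm: assumes "skew A" and inv: "\<And>X Y. Sf T (A *v X) Y + Sf T X (A *v Y) = 0"
  shows "svec T (A *v Y) = A *v svec T Y"
proof -
  have "svec T (A *v Y) $ k = (A *v svec T Y) $ k" for k
  proof -
    have "svec T (A *v Y) $ k = Sf T (e k) (A *v Y)" by (simp add: svec_def)
    also have "\<dots> = - Sf T (A *v e k) Y" using inv[of "e k" Y] by simp
    also have "\<dots> = - ((A *v e k) \<bullet> svec T Y)" by (simp add: Sf_svec)
    also have "\<dots> = (A *v svec T Y) \<bullet> e k" using skew_inner[OF assms(1), of "e k" "svec T Y"] by simp
    also have "\<dots> = (A *v svec T Y) $ k" by (rule inner_e)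
    finally show ?thesis .
  qed
  then show ?thesis by (simp add: vec_eq_iff)
qed

lemma quad_zero: assumes h: "\<And>t::real. 0 \<le> 2*t*a + t^2*b" and b: "b \<ge> 0" shows "a = 0"
proof (rule ccontr)
  assume na: "a \<noteq> 0"
  define t where "t = - a / (b + 1)"
  have b1: "b + 1 \<noteq> 0" using b by simp
  have tt: "t * (b + 1) = - a" unfolding t_def using b1 by simp
  have "(b+1)^2 * (2*t*a + t^2*b) = 2*a*(t*(b+1))*(b+1) + (t*(b+1))^2*b"
    by (simp add: power2_eq_square algebra_simps)
  also have "\<dots> = 2*a*(-a)*(b+1) + (-a)^2*b" by (simp only: tt)
  also have "\<dots> = - (a^2 * (b + 2))" by (simp add: power2_eq_square algebra_simps)
  finally have "(b+1)^2 * (2*t*a + t^2*b) = - (a^2 * (b + 2))" .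
  moreover have "0 \<le> (b+1)^2 * (2*t*a + t^2*b)" using h[of t] by simp
  moreover have "0 < a^2 * (b + 2)" using na b by simp
  ultimately show False by simp
qed

lemma schur:
  fixes s :: "real^'n \<Rightarrow> real^'n"
  assumes lin: "linear s" and sym: "\<And>x y. x \<bullet> s y = y \<bullet> s x"
    and comm: "\<And>A x. A \<in> g \<Longrightarrow> s (A *v x) = A *v s x" and irr: "irreducible_so g"
  shows "\<exists>l. \<forall>x. s x = l *\<^sub>R x"
proof -
  define q where "q x = x \<bullet> s x" for x
  have cs: "continuous_on UNIV s"
    by (rule linear_continuous_on) (use lin linear_conv_bounded_linear in blast)
  have cq: "continuous_on (sphere 0 1) q"
    unfolding q_def by (intro continuous_on_inner continuous_on_id continuous_on_subset[OF cs]) auto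
  have ne: "sphere (0::real^'n) 1 \<noteq> {}"
  proof -
    obtain i :: 'n where True by blast
    have "e i \<in> sphere 0 1" by (simp add: e_def)
    then show ?thesis by blast
  qed
  obtain u where u: "u \<in> sphere 0 1" and umax: "\<And>y. y \<in> sphere 0 1 \<Longrightarrow> q y \<le> q u"
    using continuous_attains_sup[OF compact_sphere ne cq] by blast
  define l where "l = q u"
  have nu: "norm u = 1" using u by simp
  have uu: "u \<bullet> u = 1" using nu by (simp add: norm_eq_1)
  have sscale: "s (c *\<^sub>R x) = c *\<^sub>R s x" for c x by (rule linear_scale[OF lin])
  have sadd: "s (x + y) = s x + s y" for x y by (rule linear_add[OF lin])
  have le: "q x \<le> l * (x \<bullet> x)" for x
  proof (cases "x = 0")
    case True
    then show ?thesis by (simp add: q_def)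
  next
    case False
    define y where "y = (1 / norm x) *\<^sub>R x"
    have ny: "y \<in> sphere 0 1" using False by (simp add: y_def)
    have "q y = (1 / norm x)^2 * q x" by (simp add: q_def y_def sscale power2_eq_square)
    then have "(1 / norm x)^2 * q x \<le> l" using umax[OF ny] by (simp add: l_def)
    then have "q x \<le> l * (norm x)^2" using False by (simp add: field_simps)
    then show ?thesis by (simp add: power2_norm_eq_inner)
  qed
  have p0: "u \<bullet> s y = l * (u \<bullet> y)" for y
  proof -
    define a where "a = l * (u \<bullet> y) - u \<bullet> s y"
    define b where "b = l * (y \<bullet> y) - y \<bullet> s y"
    have b0: "b \<ge> 0" using le[of y] by (simp add: b_def q_def)
    have "0 \<le> 2*t*a + t^2*b" for t
    proof -
      have L: "q (u + t *\<^sub>R y) \<le> l * ((u + t *\<^sub>R y) \<bullet> (u + t *\<^sub>R y))" by (rule le)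
      have E1: "q (u + t *\<^sub>R y) = l + 2*t*(u \<bullet> s y) + t^2*(y \<bullet> s y)"
        by (simp add: q_def l_def sadd sscale inner_add_left inner_add_right power2_eq_square
            algebra_simps sym[of y u])
      have E2: "(u + t *\<^sub>R y) \<bullet> (u + t *\<^sub>R y) = 1 + 2*t*(u \<bullet> y) + t^2*(y \<bullet> y)"
        by (simp add: inner_add_left inner_add_right inner_commute[of y u] uu power2_eq_square algebra_simps)
      have E3: "l * (1 + 2*t*(u \<bullet> y) + t^2*(y \<bullet> y)) - (l + 2*t*(u \<bullet> s y) + t^2*(y \<bullet> s y))
          = 2*t*a + t^2*b"
        by (simp add: a_def b_def algebra_simps)
      have L2: "l + 2*t*(u \<bullet> s y) + t^2*(y \<bullet> s y) \<le> l * (1 + 2*t*(u \<bullet> y) + t^2*(y \<bullet> y))"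
        using L unfolding E1 E2 .
      show ?thesis using L2 E3 by linarith
    qed
    then have "a = 0" using quad_zero b0 by blast
    then show ?thesis by (simp add: a_def)
  qed
  have su: "s u = l *\<^sub>R u"
  proof -
    have "y \<bullet> (s u - l *\<^sub>R u) = 0" for y
    proof -
      have h1: "y \<bullet> s u = l * (y \<bullet> u)"
        using sym[of y u] p0[of y] inner_commute[of u y] by simp
      then show ?thesis by (simp add: inner_diff_right)
    qed
    then have "(s u - l *\<^sub>R u) \<bullet> (s u - l *\<^sub>R u) = 0" by blast
    then show ?thesis by simp
  qed
  define W where "W = {x. s x = l *\<^sub>R x}"
  have subW: "subspace W"
    unfolding subspace_def W_def by (simp add: sadd sscale linear_0[OF lin] algebra_simps)
  have invW: "\<forall>A\<in>g. \<forall>x\<in>W. A *v x \<in> W"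
    unfolding W_def using comm by (simp add: matrix_vector_mult_scaleR)
  have uW: "u \<in> W" unfolding W_def using su by (rule CollectI)
  have un: "u \<noteq> 0"
  proof
    assume "u = 0"
    then have "norm u = 0" by simp
    with nu show False by simp
  qed
  have Wn: "W \<noteq> {0}"
  proof
    assume "W = {0}"
    then have "u = 0" using uW by simp
    with un show False by contradiction
  qed
  have irr': "\<forall>W. subspace W \<and> (\<forall>A\<in>g. \<forall>x\<in>W. A *v x \<in> W) \<longrightarrow> W = {0} \<or> W = UNIV"
    using irr unfolding irreducible_so_def .
  have "subspace W \<and> (\<forall>A\<in>g. \<forall>x\<in>W. A *v x \<in> W)" using subW invW by (rule conjI)
  then have disj: "W = {0} \<or> W = UNIV" using irr' by blast
  have WU: "W = UNIV" using disj Wn by blast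
  have "s x = l *\<^sub>R x" for x
  proof -
    have "x \<in> W" using WU by simp
    then show ?thesis unfolding W_def by simp
  qed
  then show ?thesis by blast
qed

lemma e_inner_self: "e j \<bullet> e j = 1"
  by (simp add: inner_e e_nth)

lemma part4:
  fixes T :: "real^'n^'n^'n"
  assumes lie: "lie_subalgebra_so g" and T: "T \<in> L3g g" and irr: "irreducible_so g"
    and dim: "dim (Kspace g) = 1"
  shows "inner2 (Tx T X) (Tx T Y) = 3 / real CARD('n) * normsq3 T * (X \<bullet> Y)"
proof (cases "T = 0")
  case True
  then show ?thesis by (simp add: Tx_zeroT inner2_def f2_zero normsq3_def)
next
  case False
  have inv: "Sf T (A *v X) Y + Sf T X (A *v Y) = 0" if "A \<in> g" for A X Y
    by (rule invariance[OF lie T dim False that])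
  have comm: "svec T (A *v x) = A *v svec T x" if "A \<in> g" for A x
    by (rule svec_comm[OF lieD(2)[OF lie that] inv[OF that]])
  have sym: "x \<bullet> svec T y = y \<bullet> svec T x" for x y
    by (metis Sf_svec Sf_comm)
  obtain l where l: "\<And>x. svec T x = l *\<^sub>R x"
    using schur[OF svec_lin sym comm irr] by blast
  have SfL: "Sf T X Y = l * (X \<bullet> Y)" for X Y by (simp add: Sf_svec l)
  have "3 * normsq3 T = (\<Sum>j\<in>(UNIV::'n set). Sf T (e j) (e j))" by (rule trace_Sf[symmetric])
  also have "\<dots> = l * real CARD('n)" by (simp add: SfL e_inner_self)
  finally have "l = 3 / real CARD('n) * normsq3 T" by (simp add: field_simps)
  then show ?thesis using SfL[of X Y] by (simp add: Sf_def)
qed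

theorem lemma3p1:
  fixes g :: "(real^'n^'n) set" and T :: "real^'n^'n^'n"
  assumes "lie_subalgebra_so g" and "T \<in> L3g g"
  shows "RT T \<in> Kspace g
       \<and> OmegaT T \<in> L4g g
       \<and> (RT T = 0 \<longleftrightarrow> T = 0)
       \<and> (irreducible_so g \<and> dim (Kspace g) = 1 \<longrightarrow>
           (\<forall>X Y. inner2 (Tx T X) (Tx T Y) = 3 / real CARD('n) * normsq3 T * (X \<bullet> Y)))"
  using part1[OF assms] part2[OF assms] part3[OF L3gD(1)[OF assms(2)]] part4[OF assms] by blast

end
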